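(* Let $Z_{C_2}$ be the set of $\boldsymbol{x}\in\mathbb{R}^n$ for which there exist $\lambda\ge0$, $\alpha_t\ge0$, $s_i\ge0$, $\boldsymbol{z}_{it}\in\mathbb{R}^m$ ($i\in[N],t\in[T]$) with $\lambda\delta+\frac1N\sum_{i=1}^Ns_i\le\epsilon$, $G_{f_t}(\boldsymbol{z}_{it},\alpha_t,\boldsymbol{x})+1-\boldsymbol{z}_{it}^{\top}\boldsymbol{\zeta}^i-s_i\le0$ and $\|\boldsymbol{z}_{it}\|_*\le\lambda$ for all $i\in[N],t\in[T]$. Let $\tilde Z_{C_2}$ be the set of $\boldsymbol{x}\in\mathbb{R}^n$ for which there exist $\alpha_t>0$, $q_{it}\ge0$ and $\boldsymbol{v}_{it}\in\mathbb{R}^m$ ($i\in[N],t\in[T]$) such that for all $i\in[N],t\in[T]$: $$\|\boldsymbol{v}_{it}\|_*\delta+\frac1N\sum_{j=1}^Nq_{jt}\le\epsilon\alpha_t,\qquad G_{f_t}(\boldsymbol{v}_{it},1,\boldsymbol{x})+\alpha_t-\boldsymbol{v}_{it}^{\top}\boldsymbol{\zeta}^i-q_{it}\le0.$$ Then $Z_{C_2}\subseteq\tilde Z_{C_2}$, and $\tilde Z_{C_2}$ is a convex set.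
   Context: Here $G_{f_t}(\boldsymbol{z},\alpha,\boldsymbol{x})=\sup_{\boldsymbol{\xi}\in\Xi}[\boldsymbol{z}^{\top}\boldsymbol{\xi}-\alpha f_t(\boldsymbol{x},\boldsymbol{\xi})]$. Setting: $\epsilon\in(0,1)$, $\delta>0$, $[T]=\{1,\dots,T\}$; $\Xi\subseteq\mathbb{R}^m$ nonempty closed convex; each $f_t:\mathbb{R}^n\times\Xi\to\mathbb{R}$ convex continuous in $\boldsymbol{\xi}$ for fixed $\boldsymbol{x}$ and concave continuous in $\boldsymbol{x}$ for fixed $\boldsymbol{\xi}$; $\boldsymbol{\zeta}^1,\dots,\boldsymbol{\zeta}^N\in\Xi$ given samples; $\|\cdot\|_*$ is the dual norm of a norm $\|\cdot\|$ on $\mathbb{R}^m$. *)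

theory Defs
  imports "HOL-Analysis.Analysis" "HOL-Library.Extended_Real"
begin

definition is_norm :: "('a::real_vector \<Rightarrow> real) \<Rightarrow> bool" where
  "is_norm nrm \<longleftrightarrow>
     (\<forall>x. 0 \<le> nrm x) \<and> (\<forall>x. nrm x = 0 \<longleftrightarrow> x = 0) \<and>
     (\<forall>c x. nrm (c *\<^sub>R x) = \<bar>c\<bar> * nrm x) \<and>
     (\<forall>x y. nrm (x + y) \<le> nrm x + nrm y)"

definition dual_norm :: "('a::real_inner \<Rightarrow> real) \<Rightarrow> 'a \<Rightarrow> real" where
  "dual_norm nrm z = Sup {z \<bullet> \<xi> | \<xi>. nrm \<xi> \<le> 1}"

definition G_fun :: "('x \<Rightarrow> 'a::real_inner \<Rightarrow> real) \<Rightarrow> 'a set \<Rightarrow> 'a \<Rightarrow> real \<Rightarrow> 'x \<Rightarrow> ereal" where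
  "G_fun f \<Xi> z \<alpha> x = (SUP \<xi>\<in>\<Xi>. ereal (z \<bullet> \<xi> - \<alpha> * f x \<xi>))"

definition Z_C2 ::
  "real \<Rightarrow> real \<Rightarrow> nat \<Rightarrow> nat \<Rightarrow> (nat \<Rightarrow> real^'n \<Rightarrow> real^'m \<Rightarrow> real) \<Rightarrow> (real^'m) set
    \<Rightarrow> (nat \<Rightarrow> real^'m) \<Rightarrow> (real^'m \<Rightarrow> real) \<Rightarrow> (real^'n) set" where
  "Z_C2 \<epsilon> \<delta> N T f \<Xi> \<zeta> nrm =
     {x. \<exists>(lam::real) (\<alpha>::nat \<Rightarrow> real) (s::nat \<Rightarrow> real) (z::nat \<Rightarrow> nat \<Rightarrow> real^'m).
        0 \<le> lam \<and> (\<forall>t\<in>{1..T}. 0 \<le> \<alpha> t) \<and> (\<forall>i\<in>{1..N}. 0 \<le> s i) \<and>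
        lam * \<delta> + (1 / real N) * (\<Sum>i=1..N. s i) \<le> \<epsilon> \<and>
        (\<forall>i\<in>{1..N}. \<forall>t\<in>{1..T}.
            G_fun (f t) \<Xi> (z i t) (\<alpha> t) x + ereal (1 - z i t \<bullet> \<zeta> i - s i) \<le> 0 \<and>
            dual_norm nrm (z i t) \<le> lam)}"

definition Z_C2_tilde ::
  "real \<Rightarrow> real \<Rightarrow> nat \<Rightarrow> nat \<Rightarrow> (nat \<Rightarrow> real^'n \<Rightarrow> real^'m \<Rightarrow> real) \<Rightarrow> (real^'m) set
    \<Rightarrow> (nat \<Rightarrow> real^'m) \<Rightarrow> (real^'m \<Rightarrow> real) \<Rightarrow> (real^'n) set" where
  "Z_C2_tilde \<epsilon> \<delta> N T f \<Xi> \<zeta> nrm =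
     {x. \<exists>(\<alpha>::nat \<Rightarrow> real) (q::nat \<Rightarrow> nat \<Rightarrow> real) (v::nat \<Rightarrow> nat \<Rightarrow> real^'m).
        (\<forall>t\<in>{1..T}. 0 < \<alpha> t) \<and> (\<forall>i\<in>{1..N}. \<forall>t\<in>{1..T}. 0 \<le> q i t) \<and>
        (\<forall>i\<in>{1..N}. \<forall>t\<in>{1..T}.
            dual_norm nrm (v i t) * \<delta> + (1 / real N) * (\<Sum>j=1..N. q j t) \<le> \<epsilon> * \<alpha> t \<and>
            G_fun (f t) \<Xi> (v i t) 1 x + ereal (\<alpha> t - v i t \<bullet> \<zeta> i - q i t) \<le> 0)}"

end

theory Submission imports Defs begin

lemma nrm_props:
  assumes "is_norm nrm"
  shows "nrm 0 = 0" "\<And>x. 0 \<le> nrm x" "\<And>x. nrm x = 0 \<longleftrightarrow> x = 0"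
    "\<And>c x. nrm (c *\<^sub>R x) = \<bar>c\<bar> * nrm x" "\<And>x y. nrm (x + y) \<le> nrm x + nrm y"
  using assms unfolding is_norm_def by auto

lemma nrm_lower:
  fixes nrm :: "'a::euclidean_space \<Rightarrow> real"
  assumes n: "is_norm nrm"
  shows "\<exists>m>0. \<forall>x. m * norm x \<le> nrm x"
proof -
  note P = nrm_props[OF n]
  have cv: "convex_on UNIV nrm"
  proof (rule convex_onI)
    fix t :: real and x y assume t: "0 < t" "t < 1"
    have "nrm ((1 - t) *\<^sub>R x + t *\<^sub>R y) \<le> nrm ((1 - t) *\<^sub>R x) + nrm (t *\<^sub>R y)" by (rule P(5))
    also have "\<dots> = (1 - t) * nrm x + t * nrm y" using t by (simp add: P(4))
    finally show "nrm ((1 - t) *\<^sub>R x + t *\<^sub>R y) \<le> (1 - t) * nrm x + t * nrm y" .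
  qed simp
  have "continuous_on UNIV nrm" by (rule convex_on_continuous[OF open_UNIV cv])
  hence c: "continuous_on (sphere 0 1) nrm" by (rule continuous_on_subset) simp
  obtain b :: 'a where b: "b \<in> Basis" using nonempty_Basis by blast
  hence "b \<in> sphere 0 1" by simp
  hence ne: "sphere (0::'a) 1 \<noteq> {}" by blast
  obtain x0 where x0: "x0 \<in> sphere 0 1" "\<And>y. y \<in> sphere 0 1 \<Longrightarrow> nrm x0 \<le> nrm y"
    using continuous_attains_inf[OF compact_sphere ne c] by blast
  have x0nz: "x0 \<noteq> 0" using x0(1) by auto
  have pos: "nrm x0 > 0" using P(2)[of x0] P(3)[of x0] x0nz by linarith
  have "nrm x0 * norm x \<le> nrm x" for x
  proof (cases "x = 0")
    case True then show ?thesis by (simp add: P(1))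
  next
    case False
    have s: "(1 / norm x) *\<^sub>R x \<in> sphere 0 1" using False by simp
    have "nrm x = nrm (norm x *\<^sub>R ((1 / norm x) *\<^sub>R x))" using False by simp
    also have "\<dots> = norm x * nrm ((1 / norm x) *\<^sub>R x)" by (simp add: P(4))
    finally show ?thesis using x0(2)[OF s] by (simp add: mult.commute mult_left_mono)
  qed
  thus ?thesis using pos by blast
qed

lemma dual_bdd:
  fixes nrm :: "'a::euclidean_space \<Rightarrow> real"
  assumes n: "is_norm nrm"
  shows "bdd_above {z \<bullet> \<xi> | \<xi>. nrm \<xi> \<le> 1}"
proof -
  obtain m where m: "m > 0" "\<And>x. m * norm x \<le> nrm x" using nrm_lower[OF n] by blast
  have "z \<bullet> \<xi> \<le> norm z * (1 / m)" if "nrm \<xi> \<le> 1" for \<xi>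
  proof -
    have "m * norm \<xi> \<le> 1" using m(2)[of \<xi>] that by linarith
    hence "norm \<xi> \<le> 1 / m" using m(1) by (simp add: field_simps)
    hence "norm z * norm \<xi> \<le> norm z * (1 / m)" by (intro mult_left_mono) auto
    thus ?thesis using norm_cauchy_schwarz[of z \<xi>] by linarith
  qed
  thus ?thesis unfolding bdd_above_def by blast
qed

lemma dual_upper:
  fixes nrm :: "'a::euclidean_space \<Rightarrow> real"
  assumes n: "is_norm nrm" and "nrm \<xi> \<le> 1"
  shows "z \<bullet> \<xi> \<le> dual_norm nrm z"
  unfolding dual_norm_def using assms(2) by (intro cSup_upper[OF _ dual_bdd[OF n]]) blast

lemma dual_least:
  fixes nrm :: "'a::euclidean_space \<Rightarrow> real"
  assumes n: "is_norm nrm" and "\<And>\<xi>. nrm \<xi> \<le> 1 \<Longrightarrow> z \<bullet> \<xi> \<le> b"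
  shows "dual_norm nrm z \<le> b"
  unfolding dual_norm_def
proof (rule cSup_least)
  have "nrm 0 \<le> 1" using nrm_props(1)[OF n] by simp
  hence "z \<bullet> 0 \<in> {z \<bullet> \<xi> |\<xi>. nrm \<xi> \<le> 1}" by blast
  thus "{z \<bullet> \<xi> |\<xi>. nrm \<xi> \<le> 1} \<noteq> {}" by blast
qed (use assms(2) in blast)

lemma dual_scale:
  fixes nrm :: "'a::euclidean_space \<Rightarrow> real"
  assumes n: "is_norm nrm" and c: "c \<ge> 0"
  shows "dual_norm nrm (c *\<^sub>R z) \<le> c * dual_norm nrm z"
  using n apply (rule dual_least)
  using dual_upper[OF n] c by (simp add: mult_left_mono)

lemma dual_add:
  fixes nrm :: "'a::euclidean_space \<Rightarrow> real"
  assumes n: "is_norm nrm"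
  shows "dual_norm nrm (u + w) \<le> dual_norm nrm u + dual_norm nrm w"
  using n apply (rule dual_least)
  using dual_upper[OF n] by (simp add: inner_add_left add_mono)

lemma G_le_iff:
  "G_fun f \<Xi> v a x + ereal c \<le> 0 \<longleftrightarrow> (\<forall>\<xi>\<in>\<Xi>. v \<bullet> \<xi> - a * f x \<xi> + c \<le> 0)"
proof -
  have "G_fun f \<Xi> v a x + ereal c \<le> 0 \<longleftrightarrow> G_fun f \<Xi> v a x \<le> ereal (- c)"
    by (cases "G_fun f \<Xi> v a x") auto
  also have "\<dots> \<longleftrightarrow> (\<forall>\<xi>\<in>\<Xi>. v \<bullet> \<xi> - a * f x \<xi> + c \<le> 0)"
    unfolding G_fun_def SUP_le_iff by auto
  finally show ?thesis .
qed

theorem theorem2: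
  fixes \<epsilon> \<delta> :: real and N T :: nat
    and f :: "nat \<Rightarrow> real^'n \<Rightarrow> real^'m \<Rightarrow> real"
    and \<Xi> :: "(real^'m) set" and \<zeta> :: "nat \<Rightarrow> real^'m"
    and nrm :: "real^'m \<Rightarrow> real"
  assumes eps: "0 < \<epsilon>" "\<epsilon> < 1"
    and delta: "0 < \<delta>"
    and Xi: "\<Xi> \<noteq> {}" "closed \<Xi>" "convex \<Xi>"
    and f_xi: "\<And>t x. t \<in> {1..T} \<Longrightarrow> convex_on \<Xi> (f t x) \<and> continuous_on \<Xi> (f t x)"
    and f_x: "\<And>t \<xi>. t \<in> {1..T} \<Longrightarrow> \<xi> \<in> \<Xi> \<Longrightarrow>
               concave_on UNIV (\<lambda>x. f t x \<xi>) \<and> continuous_on UNIV (\<lambda>x. f t x \<xi>)"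
    and samples: "\<And>i. i \<in> {1..N} \<Longrightarrow> \<zeta> i \<in> \<Xi>"
    and nrm: "is_norm nrm"
  shows "Z_C2 \<epsilon> \<delta> N T f \<Xi> \<zeta> nrm \<subseteq> Z_C2_tilde \<epsilon> \<delta> N T f \<Xi> \<zeta> nrm
         \<and> convex (Z_C2_tilde \<epsilon> \<delta> N T f \<Xi> \<zeta> nrm)"
proof
  note P = nrm_props[OF nrm]
  show "Z_C2 \<epsilon> \<delta> N T f \<Xi> \<zeta> nrm \<subseteq> Z_C2_tilde \<epsilon> \<delta> N T f \<Xi> \<zeta> nrm"
  proof
    fix x assume "x \<in> Z_C2 \<epsilon> \<delta> N T f \<Xi> \<zeta> nrm"
    then obtain lam \<alpha> s z where lam: "0 \<le> lam" and al: "\<forall>t\<in>{1..T}. 0 \<le> \<alpha> t"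
      and s: "\<forall>i\<in>{1..N}. 0 \<le> s i"
      and sm: "lam * \<delta> + (1 / real N) * (\<Sum>i=1..N. s i) \<le> \<epsilon>"
      and G: "\<forall>i\<in>{1..N}. \<forall>t\<in>{1..T}.
            G_fun (f t) \<Xi> (z i t) (\<alpha> t) x + ereal (1 - z i t \<bullet> \<zeta> i - s i) \<le> 0 \<and>
            dual_norm nrm (z i t) \<le> lam"
      unfolding Z_C2_def by blast
    show "x \<in> Z_C2_tilde \<epsilon> \<delta> N T f \<Xi> \<zeta> nrm"
    proof (cases "N = 0")
      case True
      show ?thesis unfolding Z_C2_tilde_def using True
        by (intro CollectI exI[of _ "\<lambda>t. 1"]) auto
    next
      case False
      have sumpos: "0 \<le> (1 / real N) * (\<Sum>i=1..N. s i)"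
        using s by (intro mult_nonneg_nonneg sum_nonneg) auto
      have apos: "0 < \<alpha> t" if t: "t \<in> {1..T}" for t
      proof (rule ccontr)
        assume "\<not> 0 < \<alpha> t"
        hence a0: "\<alpha> t = 0" using al t by force
        have s1: "1 \<le> s i" if i: "i \<in> {1..N}" for i
        proof -
          have "\<forall>\<xi>\<in>\<Xi>. z i t \<bullet> \<xi> - \<alpha> t * f t x \<xi> + (1 - z i t \<bullet> \<zeta> i - s i) \<le> 0"
            using G i t unfolding G_le_iff by blast
          hence "z i t \<bullet> \<zeta> i - \<alpha> t * f t x (\<zeta> i) + (1 - z i t \<bullet> \<zeta> i - s i) \<le> 0"
            using samples[OF i] by blast
          thus ?thesis using a0 by simp
        qed
        have "real N \<le> (\<Sum>i=1..N. s i)"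
          using sum_mono[of "{1..N}" "\<lambda>_. 1" s] s1 by simp
        hence "1 \<le> (1 / real N) * (\<Sum>i=1..N. s i)" using False by (simp add: field_simps)
        moreover have "0 \<le> lam * \<delta>" using lam delta by simp
        ultimately show False using sm eps by linarith
      qed
      show ?thesis unfolding Z_C2_tilde_def
      proof (intro CollectI exI[of _ "\<lambda>t. 1 / \<alpha> t"] exI[of _ "\<lambda>i t. s i / \<alpha> t"]
          exI[of _ "\<lambda>i t. (1 / \<alpha> t) *\<^sub>R z i t"] conjI ballI)
        fix t assume t: "t \<in> {1..T}"
        show "0 < 1 / \<alpha> t" using apos[OF t] by simp
        fix i assume i: "i \<in> {1..N}"
        show "0 \<le> s i / \<alpha> t" using apos[OF t] s i by simp
      next
        fix i t assume i: "i \<in> {1..N}" and t: "t \<in> {1..T}"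
        have a: "0 < \<alpha> t" by (rule apos[OF t])
        have d: "dual_norm nrm ((1 / \<alpha> t) *\<^sub>R z i t) \<le> (1 / \<alpha> t) * lam"
          using dual_scale[OF nrm, of "1 / \<alpha> t" "z i t"] G i t a
          by (smt (verit) divide_pos_pos mult_left_mono zero_less_one)
        have "(\<Sum>j=1..N. s j / \<alpha> t) = (1 / \<alpha> t) * (\<Sum>j=1..N. s j)"
          by (simp add: sum_divide_distrib)
        hence "dual_norm nrm ((1 / \<alpha> t) *\<^sub>R z i t) * \<delta> + 1 / real N * (\<Sum>j = 1..N. s j / \<alpha> t)
           \<le> (1 / \<alpha> t) * (lam * \<delta> + (1 / real N) * (\<Sum>i=1..N. s i))"
          using mult_right_mono[OF d less_imp_le[OF delta]] by (simp add: algebra_simps)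
        also have "\<dots> \<le> (1 / \<alpha> t) * \<epsilon>" using sm a by (intro mult_left_mono) auto
        finally show "dual_norm nrm ((1 / \<alpha> t) *\<^sub>R z i t) * \<delta> + 1 / real N * (\<Sum>j = 1..N. s j / \<alpha> t)
           \<le> \<epsilon> * (1 / \<alpha> t)" by (simp add: mult.commute)
        have Gi: "\<forall>\<xi>\<in>\<Xi>. z i t \<bullet> \<xi> - \<alpha> t * f t x \<xi> + (1 - z i t \<bullet> \<zeta> i - s i) \<le> 0"
          using G i t unfolding G_le_iff by blast
        show "G_fun (f t) \<Xi> ((1 / \<alpha> t) *\<^sub>R z i t) 1 x
           + ereal (1 / \<alpha> t - (1 / \<alpha> t) *\<^sub>R z i t \<bullet> \<zeta> i - s i / \<alpha> t) \<le> 0"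
          unfolding G_le_iff
        proof
          fix \<xi> assume "\<xi> \<in> \<Xi>"
          hence h: "z i t \<bullet> \<xi> - \<alpha> t * f t x \<xi> + (1 - z i t \<bullet> \<zeta> i - s i) \<le> 0" using Gi by blast
          have "(1 / \<alpha> t) *\<^sub>R z i t \<bullet> \<xi> - 1 * f t x \<xi> +
            (1 / \<alpha> t - (1 / \<alpha> t) *\<^sub>R z i t \<bullet> \<zeta> i - s i / \<alpha> t)
            = (1 / \<alpha> t) * (z i t \<bullet> \<xi> - \<alpha> t * f t x \<xi> + (1 - z i t \<bullet> \<zeta> i - s i))"
            using a by (simp add: field_simps)
          also have "\<dots> \<le> 0" using h a by (simp add: divide_nonpos_pos)
          finally show "(1 / \<alpha> t) *\<^sub>R z i t \<bullet> \<xi> - 1 * f t x \<xi> +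
            (1 / \<alpha> t - (1 / \<alpha> t) *\<^sub>R z i t \<bullet> \<zeta> i - s i / \<alpha> t) \<le> 0" .
        qed
      qed
    qed
  qed
next
  show "convex (Z_C2_tilde \<epsilon> \<delta> N T f \<Xi> \<zeta> nrm)"
  proof (rule convexI)
    fix x1 x2 and u v :: real
    assume x1: "x1 \<in> Z_C2_tilde \<epsilon> \<delta> N T f \<Xi> \<zeta> nrm" and x2: "x2 \<in> Z_C2_tilde \<epsilon> \<delta> N T f \<Xi> \<zeta> nrm"
      and uv: "0 \<le> u" "0 \<le> v" "u + v = 1"
    obtain a1 q1 v1 where A1: "\<forall>t\<in>{1..T}. 0 < a1 t" "\<forall>i\<in>{1..N}. \<forall>t\<in>{1..T}. 0 \<le> q1 i t"
      "\<forall>i\<in>{1..N}. \<forall>t\<in>{1..T}.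
            dual_norm nrm (v1 i t) * \<delta> + (1 / real N) * (\<Sum>j=1..N. q1 j t) \<le> \<epsilon> * a1 t \<and>
            G_fun (f t) \<Xi> (v1 i t) 1 x1 + ereal (a1 t - v1 i t \<bullet> \<zeta> i - q1 i t) \<le> 0"
      using x1 unfolding Z_C2_tilde_def by blast
    obtain a2 q2 v2 where A2: "\<forall>t\<in>{1..T}. 0 < a2 t" "\<forall>i\<in>{1..N}. \<forall>t\<in>{1..T}. 0 \<le> q2 i t"
      "\<forall>i\<in>{1..N}. \<forall>t\<in>{1..T}.
            dual_norm nrm (v2 i t) * \<delta> + (1 / real N) * (\<Sum>j=1..N. q2 j t) \<le> \<epsilon> * a2 t \<and>
            G_fun (f t) \<Xi> (v2 i t) 1 x2 + ereal (a2 t - v2 i t \<bullet> \<zeta> i - q2 i t) \<le> 0"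
      using x2 unfolding Z_C2_tilde_def by blast
    show "u *\<^sub>R x1 + v *\<^sub>R x2 \<in> Z_C2_tilde \<epsilon> \<delta> N T f \<Xi> \<zeta> nrm"
      unfolding Z_C2_tilde_def
    proof (intro CollectI exI[of _ "\<lambda>t. u * a1 t + v * a2 t"] exI[of _ "\<lambda>i t. u * q1 i t + v * q2 i t"]
          exI[of _ "\<lambda>i t. u *\<^sub>R v1 i t + v *\<^sub>R v2 i t"] conjI ballI)
      fix t assume t: "t \<in> {1..T}"
      have "0 < a1 t" "0 < a2 t" using A1 A2 t by auto
      thus "0 < u * a1 t + v * a2 t" using uv
        by (smt (verit) mult_nonneg_nonneg mult_pos_pos)
      fix i assume i: "i \<in> {1..N}"
      show "0 \<le> u * q1 i t + v * q2 i t" using A1 A2 t i uv by simp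
    next
      fix i t assume i: "i \<in> {1..N}" and t: "t \<in> {1..T}"
      have h1: "dual_norm nrm (v1 i t) * \<delta> + (1 / real N) * (\<Sum>j=1..N. q1 j t) \<le> \<epsilon> * a1 t"
        and g1: "G_fun (f t) \<Xi> (v1 i t) 1 x1 + ereal (a1 t - v1 i t \<bullet> \<zeta> i - q1 i t) \<le> 0"
        using A1 i t by auto
      have h2: "dual_norm nrm (v2 i t) * \<delta> + (1 / real N) * (\<Sum>j=1..N. q2 j t) \<le> \<epsilon> * a2 t"
        and g2: "G_fun (f t) \<Xi> (v2 i t) 1 x2 + ereal (a2 t - v2 i t \<bullet> \<zeta> i - q2 i t) \<le> 0"
        using A2 i t by auto
      have dn: "dual_norm nrm (u *\<^sub>R v1 i t + v *\<^sub>R v2 i t) \<le> u * dual_norm nrm (v1 i t) + v * dual_norm nrm (v2 i t)"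
        using dual_add[OF nrm, of "u *\<^sub>R v1 i t" "v *\<^sub>R v2 i t"]
          dual_scale[OF nrm uv(1), of "v1 i t"] dual_scale[OF nrm uv(2), of "v2 i t"] by linarith
      have sq: "(1 / real N) * (\<Sum>j=1..N. u * q1 j t + v * q2 j t)
          = u * ((1 / real N) * (\<Sum>j=1..N. q1 j t)) + v * ((1 / real N) * (\<Sum>j=1..N. q2 j t))"
        by (simp add: sum.distrib sum_distrib_left algebra_simps)
      have "dual_norm nrm (u *\<^sub>R v1 i t + v *\<^sub>R v2 i t) * \<delta>
          \<le> u * (dual_norm nrm (v1 i t) * \<delta>) + v * (dual_norm nrm (v2 i t) * \<delta>)"
        using mult_right_mono[OF dn less_imp_le[OF delta]] by (simp add: algebra_simps)
      moreover have "u * (dual_norm nrm (v1 i t) * \<delta> + (1 / real N) * (\<Sum>j=1..N. q1 j t)) \<le> u * (\<epsilon> * a1 t)"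
        using h1 uv(1) by (rule mult_left_mono)
      moreover have "v * (dual_norm nrm (v2 i t) * \<delta> + (1 / real N) * (\<Sum>j=1..N. q2 j t)) \<le> v * (\<epsilon> * a2 t)"
        using h2 uv(2) by (rule mult_left_mono)
      ultimately show "dual_norm nrm (u *\<^sub>R v1 i t + v *\<^sub>R v2 i t) * \<delta> +
          1 / real N * (\<Sum>j = 1..N. u * q1 j t + v * q2 j t) \<le> \<epsilon> * (u * a1 t + v * a2 t)"
        unfolding sq by (simp add: algebra_simps)
      show "G_fun (f t) \<Xi> (u *\<^sub>R v1 i t + v *\<^sub>R v2 i t) 1 (u *\<^sub>R x1 + v *\<^sub>R x2) +
          ereal (u * a1 t + v * a2 t - (u *\<^sub>R v1 i t + v *\<^sub>R v2 i t) \<bullet> \<zeta> i - (u * q1 i t + v * q2 i t)) \<le> 0"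
        unfolding G_le_iff
      proof
        fix \<xi> assume xi: "\<xi> \<in> \<Xi>"
        have e1: "v1 i t \<bullet> \<xi> - 1 * f t x1 \<xi> + (a1 t - v1 i t \<bullet> \<zeta> i - q1 i t) \<le> 0"
          using g1 xi unfolding G_le_iff by blast
        have e2: "v2 i t \<bullet> \<xi> - 1 * f t x2 \<xi> + (a2 t - v2 i t \<bullet> \<zeta> i - q2 i t) \<le> 0"
          using g2 xi unfolding G_le_iff by blast
        have cc: "u * f t x1 \<xi> + v * f t x2 \<xi> \<le> f t (u *\<^sub>R x1 + v *\<^sub>R x2) \<xi>"
          using f_x[OF t xi] uv unfolding concave_on_iff by blast
        have m1: "u * (v1 i t \<bullet> \<xi> - 1 * f t x1 \<xi> + (a1 t - v1 i t \<bullet> \<zeta> i - q1 i t)) \<le> 0"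
          using e1 uv(1) by (simp add: mult_nonneg_nonpos)
        have m2: "v * (v2 i t \<bullet> \<xi> - 1 * f t x2 \<xi> + (a2 t - v2 i t \<bullet> \<zeta> i - q2 i t)) \<le> 0"
          using e2 uv(2) by (simp add: mult_nonneg_nonpos)
        show "(u *\<^sub>R v1 i t + v *\<^sub>R v2 i t) \<bullet> \<xi> - 1 * f t (u *\<^sub>R x1 + v *\<^sub>R x2) \<xi> +
          (u * a1 t + v * a2 t - (u *\<^sub>R v1 i t + v *\<^sub>R v2 i t) \<bullet> \<zeta> i - (u * q1 i t + v * q2 i t)) \<le> 0"
          using m1 m2 cc by (simp add: inner_add_left algebra_simps)
      qed
    qed
  qed
qed


end
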